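(* Fix an agent index $i$ and assume the prediction horizon satisfies $N_i \ge n_i$. Suppose the reference of agent $i$ evolves according to the exosystem $w_i(s+1) = S w_i(s)$ for all $s$, and that at each time $s$ at which $\mathbb{QP}_i(x_i(s),w_i(s))$ is feasible the applied input is $u_i(s) = \kappa_i(x_i(s),w_i(s))$. If $\mathbb{QP}_i(x_i(t),w_i(t))$ is feasible at time $t$, then: (i) (constraint satisfaction) $[x_i(t)^\top\ u_i(t)^\top]^\top \in \mathbb{Z}_i$; (ii) (recursive feasibility) $\mathbb{QP}_i(x_i(t+1),w_i(t+1))$ is feasible at time $t+1$; (iii) (asymptotic stability) if moreover $w_i(t) \in \mathcal{R}_\infty^i$, then the tracking error satisfies $e_i(s) = y_i(s) - Q_e w_i(s) \to \mathbf{0}$ as $s \to \infty$.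
   Context: Agent $i$: $x_i(t+1) = A_i x_i(t) + B_i u_i(t)$, $y_i(t) = C_i x_i(t)$, $t \in \{0,1,2,\dots\}$, with $x_i(t)\in\mathbb{R}^{n_i}$, $u_i(t)\in\mathbb{R}^{m_i}$, $y_i(t)\in\mathbb{R}^q$, subject to the constraint $[x_i(t)^\top\ u_i(t)^\top]^\top \in \mathbb{Z}_i$. Standing assumptions: $(A_i,B_i)$ is controllable; $\mathbb{Z}_i$ is a polytope containing the origin in its interior; $K_i$ is a fixed matrix such that $A_i^{c} := A_i + B_i K_i$ is Schur. Exosystem: $S\in\mathbb{R}^{p\times p}$, $Q_e\in\mathbb{R}^{q\times p}$ with $S^\rho = I$ for some positive integer $\rho$, and for every eigenvalue $\lambda$ of $S$ the matrix $\begin{bmatrix} A_i-\lambda I & B_i\\ C_i & \mathbf{0}\end{bmatrix}$ has full row rank. $\Pi_i,\Gamma_i$ are matrices with $A_i\Pi_i + B_i\Gamma_i = \Pi_i S$ and $C_i\Pi_i = Q_e$, and $L_i := \Gamma_i - K_i\Pi_i$. The reference is $w_i(t)\in\mathbb{R}^p$ and $e_i(t) = y_i(t) - Q_e w_i(t)$. Admissible sets: fix $\epsilon_i\in(0,1)$. $\mathcal{O}_\infty^i$ is the set of $(x,w)\in\mathbb{R}^{n_i}\times\mathbb{R}^p$ such that the sequence $x(0)=x$, $w(0)=w$, $x(k+1) = A_i^c x(k) + B_i L_i w(k)$, $w(k+1) = S w(k)$ satisfies $[x(k)^\top\ (K_i x(k) + L_i w(k))^\top]^\top \in (1-\epsilon_i)\mathbb{Z}_i$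 for all $k\ge 0$. $\mathcal{R}_\infty^i = \{w : \exists x \text{ with } [x^\top\ w^\top]^\top \in \mathcal{O}_\infty^i\}$. Weights: $T_i = \sum_{k=1}^{\rho}(S^k)^\top T_i^0 S^k$ with $T_i^0$ symmetric positive definite; $Q_i, R_i$ symmetric positive definite; $P_i$ is the (positive definite) solution of $(A_i^c)^\top P_i A_i^c - P_i + Q_i = \mathbf{0}$. $\|z\|_T^2 = z^\top T z$. MPC problem $\mathbb{QP}_i(x_i(t),w_i(t))$: decision variables $\bar w_i(0|t)\in\mathbb{R}^p$ and $v_i(k|t)\in\mathbb{R}^{m_i}$, $k=0,\dots,N_i-1$; predictions $x_i(0|t) = x_i(t)$, $x_i(k+1|t) = A_i^c x_i(k|t) + B_i L_i \bar w_i(k|t) + B_i v_i(k|t)$, $\bar w_i(k+1|t) = S\bar w_i(k|t)$; constraints $[x_i(k|t)^\top\ (K_i x_i(k|t) + L_i\bar w_i(k|t) + v_i(k|t))^\top]^\top\in\mathbb{Z}_i$ for $k=0,\dots,N_i-1$, and $[x_i(N_i|t)^\top\ \bar w_i(N_i|t)^\top]^\top\in\mathcal{O}_\infty^i$; cost $J_i = \|\bar w_i(0|t)-w_i(t)\|_{T_i}^2 + \sum_{k=0}^{N_i-1}\|x_i(k|t)-\Pi_i\bar w_i(k|t)\|_{Q_i}^2 + \sum_{k=0}^{N_i-1}\|v_i(k|t)\|_{R_i}^2 + \|x_i(N_i|t)-\Pi_i\bar w_i(N_i|t)\|_{P_i}^2$, to be minimized. With optimizer $\bar w_i^*(0|t),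 v_i^*(0|t)$, the MPC control law is $\kappa_i(x_i(t),w_i(t)) = K_i x_i(t) + L_i\bar w_i^*(0|t) + v_i^*(0|t)$. *)

theory Defs
  imports "HOL-Analysis.Analysis"
begin

primrec mpow :: "'a::comm_ring_1^'n^'n \<Rightarrow> nat \<Rightarrow> 'a^'n^'n" where
  "mpow M 0 = mat 1"
| "mpow M (Suc k) = M ** mpow M k"

definition cmat :: "real^'c^'r \<Rightarrow> complex^'c^'r" where
  "cmat M = (\<chi> i j. complex_of_real (M $ i $ j))"

definition is_eigenvalue :: "real^'n^'n \<Rightarrow> complex \<Rightarrow> bool" where
  "is_eigenvalue M mu \<longleftrightarrow> (\<exists>v::complex^'n. v \<noteq> 0 \<and> cmat M *v v = mu *s v)"

definition schur :: "real^'n^'n \<Rightarrow> bool" where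
  "schur M \<longleftrightarrow> (\<forall>mu. is_eigenvalue M mu \<longrightarrow> cmod mu < 1)"

text \<open>Controllability of (A,B): the columns of [B, AB, ..., A^(n-1) B] span R^n
  (i.e. the controllability matrix has full rank n).\<close>
definition controllable :: "real^'n^'n \<Rightarrow> real^'m^'n \<Rightarrow> bool" where
  "controllable A B \<longleftrightarrow>
     span (\<Union>k<CARD('n). range (\<lambda>u. mpow A k *v (B *v u))) = (UNIV :: (real^'n) set)"

definition sym_pos_def :: "real^'n^'n \<Rightarrow> bool" where
  "sym_pos_def M \<longleftrightarrow> transpose M = M \<and> (\<forall>x. x \<noteq> 0 \<longrightarrow> x \<bullet> (M *v x) > 0)"

definition qnorm2 :: "real^'n^'n \<Rightarrow> real^'n \<Rightarrow> real" where
  "qnorm2 T z = z \<bullet> (T *v z)"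

text \<open>The block matrix [A - lambda I, B; C, 0] (complex, (n+q) x (n+m)).\<close>
definition hautus_matrix ::
  "real^'n^'n \<Rightarrow> real^'m^'n \<Rightarrow> real^'n^'q \<Rightarrow> complex \<Rightarrow> complex^('n+'m)^('n+'q)" where
  "hautus_matrix A B C mu = (\<chi> r c.
     (case r of
        Inl i \<Rightarrow> (case c of Inl j \<Rightarrow> complex_of_real (A $ i $ j) - (if i = j then mu else 0)
                          | Inr j \<Rightarrow> complex_of_real (B $ i $ j))
      | Inr i \<Rightarrow> (case c of Inl j \<Rightarrow> complex_of_real (C $ i $ j)
                          | Inr j \<Rightarrow> 0)))"

primrec cl_state :: "real^'n^'n \<Rightarrow> real^'m^'n \<Rightarrow> real^'p^'m \<Rightarrow> real^'p^'p
     \<Rightarrow> real^'n \<Rightarrow> real^'p \<Rightarrow> nat \<Rightarrow> real^'n" where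
  "cl_state Ac B L S x w 0 = x"
| "cl_state Ac B L S x w (Suc k) =
     Ac *v cl_state Ac B L S x w k + B *v (L *v (mpow S k *v w))"

definition O_inf :: "real^'n^'n \<Rightarrow> real^'m^'n \<Rightarrow> real^'n^'m \<Rightarrow> real^'p^'m \<Rightarrow> real^'p^'p
     \<Rightarrow> real \<Rightarrow> ((real^'n) \<times> (real^'m)) set \<Rightarrow> ((real^'n) \<times> (real^'p)) set" where
  "O_inf A B K L S \<epsilon> Z = {(x, w). \<forall>k.
      (cl_state (A + B ** K) B L S x w k,
       K *v cl_state (A + B ** K) B L S x w k + L *v (mpow S k *v w))
      \<in> (\<lambda>z. (1 - \<epsilon>) *\<^sub>R z) ` Z}"

definition R_inf :: "real^'n^'n \<Rightarrow> real^'m^'n \<Rightarrow> real^'n^'m \<Rightarrow> real^'p^'m \<Rightarrow> real^'p^'p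
     \<Rightarrow> real \<Rightarrow> ((real^'n) \<times> (real^'m)) set \<Rightarrow> (real^'p) set" where
  "R_inf A B K L S \<epsilon> Z = {w. \<exists>x. (x, w) \<in> O_inf A B K L S \<epsilon> Z}"

text \<open>Predicted state x(k|t) given decision variables wb0 = wbar(0|t) and v(k|t).\<close>
primrec pred_state :: "real^'n^'n \<Rightarrow> real^'m^'n \<Rightarrow> real^'p^'m \<Rightarrow> real^'p^'p
     \<Rightarrow> real^'n \<Rightarrow> real^'p \<Rightarrow> (nat \<Rightarrow> real^'m) \<Rightarrow> nat \<Rightarrow> real^'n" where
  "pred_state Ac B L S x wb0 v 0 = x"
| "pred_state Ac B L S x wb0 v (Suc k) =
     Ac *v pred_state Ac B L S x wb0 v k + B *v (L *v (mpow S k *v wb0)) + B *v v k"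

definition qp_feasible_for ::
  "real^'n^'n \<Rightarrow> real^'m^'n \<Rightarrow> real^'n^'m \<Rightarrow> real^'p^'m \<Rightarrow> real^'p^'p
   \<Rightarrow> real \<Rightarrow> ((real^'n) \<times> (real^'m)) set \<Rightarrow> nat
   \<Rightarrow> real^'n \<Rightarrow> real^'p \<Rightarrow> (nat \<Rightarrow> real^'m) \<Rightarrow> bool" where
  "qp_feasible_for A B K L S \<epsilon> Z N x wb0 v \<longleftrightarrow>
     (\<forall>k<N. (pred_state (A + B ** K) B L S x wb0 v k,
             K *v pred_state (A + B ** K) B L S x wb0 v k + L *v (mpow S k *v wb0) + v k) \<in> Z)
   \<and> (pred_state (A + B ** K) B L S x wb0 v N, mpow S N *v wb0) \<in> O_inf A B K L S \<epsilon> Z"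

definition qp_feasible ::
  "real^'n^'n \<Rightarrow> real^'m^'n \<Rightarrow> real^'n^'m \<Rightarrow> real^'p^'m \<Rightarrow> real^'p^'p
   \<Rightarrow> real \<Rightarrow> ((real^'n) \<times> (real^'m)) set \<Rightarrow> nat \<Rightarrow> real^'n \<Rightarrow> real^'p \<Rightarrow> bool" where
  "qp_feasible A B K L S \<epsilon> Z N x w \<longleftrightarrow> (\<exists>wb0 v. qp_feasible_for A B K L S \<epsilon> Z N x wb0 v)"

definition qp_cost ::
  "real^'n^'n \<Rightarrow> real^'m^'n \<Rightarrow> real^'n^'m \<Rightarrow> real^'p^'m \<Rightarrow> real^'p^'p \<Rightarrow> real^'p^'n
   \<Rightarrow> real^'p^'p \<Rightarrow> real^'n^'n \<Rightarrow> real^'m^'m \<Rightarrow> real^'n^'n \<Rightarrow> nat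
   \<Rightarrow> real^'n \<Rightarrow> real^'p \<Rightarrow> real^'p \<Rightarrow> (nat \<Rightarrow> real^'m) \<Rightarrow> real" where
  "qp_cost A B K L S Pim T Q R P N x w wb0 v =
     qnorm2 T (wb0 - w)
   + (\<Sum>k<N. qnorm2 Q (pred_state (A + B ** K) B L S x wb0 v k - Pim *v (mpow S k *v wb0)))
   + (\<Sum>k<N. qnorm2 R (v k))
   + qnorm2 P (pred_state (A + B ** K) B L S x wb0 v N - Pim *v (mpow S N *v wb0))"

definition qp_optimal ::
  "real^'n^'n \<Rightarrow> real^'m^'n \<Rightarrow> real^'n^'m \<Rightarrow> real^'p^'m \<Rightarrow> real^'p^'p \<Rightarrow> real^'p^'n
   \<Rightarrow> real^'p^'p \<Rightarrow> real^'n^'n \<Rightarrow> real^'m^'m \<Rightarrow> real^'n^'n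
   \<Rightarrow> real \<Rightarrow> ((real^'n) \<times> (real^'m)) set \<Rightarrow> nat
   \<Rightarrow> real^'n \<Rightarrow> real^'p \<Rightarrow> real^'p \<Rightarrow> (nat \<Rightarrow> real^'m) \<Rightarrow> bool" where
  "qp_optimal A B K L S Pim T Q R P \<epsilon> Z N x w wb0 v \<longleftrightarrow>
     qp_feasible_for A B K L S \<epsilon> Z N x wb0 v \<and>
     (\<forall>wb0' v'. qp_feasible_for A B K L S \<epsilon> Z N x wb0' v' \<longrightarrow>
        qp_cost A B K L S Pim T Q R P N x w wb0 v \<le> qp_cost A B K L S Pim T Q R P N x w wb0' v')"

end

theory Submission
  imports Defs
begin

lemma mpow_Suc_right: "mpow M (Suc k) = mpow M k ** M"
  by (induction k) (simp_all add: matrix_mul_assoc)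

lemma mpow_add: "mpow M (a + b) = mpow M a ** mpow M b"
  by (induction a) (simp_all add: matrix_mul_assoc)

lemma mpow_one: "mpow (mat 1) b = (mat 1 :: 'a::comm_ring_1^'n^'n)"
  by (induction b) simp_all

lemma mpow_mult: "mpow M (a * b) = mpow (mpow M a) b"
  by (induction b) (simp_all add: mpow_add)

lemma mpow_vec_Suc: "mpow S k *v (S *v w) = mpow S (Suc k) *v (w::real^'p)"
  by (metis mpow_Suc_right matrix_vector_mul_assoc)

lemma mpow_vec_Suc': "S *v (mpow S k *v w) = mpow S (Suc k) *v (w::real^'p)"
  by (simp add: matrix_vector_mul_assoc)

lemma mpow_vec_add: "mpow S a *v (mpow S b *v w) = mpow S (a + b) *v (w::real^'p)"
  by (simp add: mpow_add matrix_vector_mul_assoc)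

lemma mpow_periodic:
  assumes "mpow S \<rho> = mat 1"
  shows "mpow S (k + \<rho> * j) = (mpow S k :: real^'p^'p)"
  by (simp add: mpow_add mpow_mult assms mpow_one)

primrec traj :: "real^'n^'n \<Rightarrow> real^'m^'n \<Rightarrow> real^'n \<Rightarrow> (nat \<Rightarrow> real^'m) \<Rightarrow> nat \<Rightarrow> real^'n" where
  "traj M B z v 0 = z"
| "traj M B z v (Suc k) = M *v traj M B z v k + B *v v k"

lemma mv_sum: "(A::real^'n^'m) *v sum f I = (\<Sum>i\<in>I. A *v f i)"
  using linear_sum[OF matrix_vector_mul_linear] by auto

lemma traj_zero_input: "traj M B z (\<lambda>_. 0) k = mpow M k *v z"
  by (induction k) (simp_all add: matrix_vector_mul_assoc)

lemma traj_add: "traj M B (z1 + z2) (\<lambda>k. v1 k + v2 k) k = traj M B z1 v1 k + traj M B z2 v2 k"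
  by (induction k) (simp_all add: algebra_simps)

lemma traj_scale: "traj M B (c *\<^sub>R z) (\<lambda>k. c *\<^sub>R v k) k = c *\<^sub>R traj M B z v k"
  by (induction k) (simp_all add: algebra_simps)

lemma traj_sum:
  assumes "finite I"
  shows "traj M B (\<Sum>i\<in>I. c i *\<^sub>R z i) (\<lambda>k. \<Sum>i\<in>I. c i *\<^sub>R v i k) k = (\<Sum>i\<in>I. c i *\<^sub>R traj M B (z i) (v i) k)"
proof (induction k)
  case 0 then show ?case by simp
next
  case (Suc k)
  then show ?case
    by (simp add: mv_sum matrix_vector_mult_scaleR sum.distrib scaleR_add_right)
qed

lemma traj_feedback:
  "traj A B z u k = traj (A + B ** K) B z (\<lambda>j. u j - K *v traj A B z u j) k"
proof (induction k)
  case 0 then show ?case by simp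
next
  case (Suc k)
  then show ?case
    by (simp add: matrix_vector_mult_add_rdistrib matrix_vector_mul_assoc[symmetric] algebra_simps)
qed

lemma traj_impulse:
  "traj A B 0 (\<lambda>j. if j = i then w else 0) (Suc i + d) = mpow A d *v (B *v w)"
proof -
  have z: "traj A B 0 (\<lambda>j. if j = i then w else 0) j = 0" if "j \<le> i" for j
    using that by (induction j) auto
  show ?thesis
  proof (induction d)
    case 0 then show ?case using z[of i] by simp
  next
    case (Suc d)
    then show ?case by (simp add: matrix_vector_mul_assoc matrix_mul_assoc)
  qed
qed

lemma reach_subspace: "subspace {traj A B 0 u n | u. True}"
  unfolding subspace_def
proof (intro conjI allI impI ballI)
  show "0 \<in> {traj A B 0 u n | u. True}"
    by (rule CollectI, rule exI[of _ "\<lambda>_. 0"]) (simp add: traj_zero_input)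
next
  fix x y assume "x \<in> {traj A B 0 u n | u. True}" "y \<in> {traj A B 0 u n | u. True}"
  then obtain u1 u2 where "x = traj A B 0 u1 n" "y = traj A B 0 u2 n" by auto
  then show "x + y \<in> {traj A B 0 u n | u. True}"
    using traj_add[of A B 0 0 u1 u2 n] by (metis (mono_tags, lifting) add_0 mem_Collect_eq)
next
  fix c x assume "x \<in> {traj A B 0 u n | u. True}"
  then obtain u1 where "x = traj A B 0 u1 n" by auto
  then show "c *\<^sub>R x \<in> {traj A B 0 u n | u. True}"
    using traj_scale[of A B c 0 u1 n] by (metis (mono_tags, lifting) mem_Collect_eq scale_zero_right)
qed

lemma reach_all:
  assumes "controllable A (B::real^'m^'n)"
  shows "\<exists>u. traj A B 0 u CARD('n) = y"
proof -
  let ?n = "CARD('n)"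
  have "(\<Union>k<?n. range (\<lambda>u. mpow A k *v (B *v u))) \<subseteq> {traj A B 0 u ?n | u. True}"
  proof safe
    fix k w assume k: "k < ?n"
    have "traj A B 0 (\<lambda>j. if j = ?n - 1 - k then w else 0) (Suc (?n - 1 - k) + k) = mpow A k *v (B *v w)"
      by (rule traj_impulse)
    moreover have "Suc (?n - 1 - k) + k = ?n" using k by simp
    ultimately show "\<exists>u. mpow A k *v (B *v w) = traj A B 0 u ?n \<and> True" by metis
  qed
  from span_minimal[OF this reach_subspace] assms
  have "y \<in> {traj A B 0 u ?n | u. True}"
    unfolding controllable_def by auto
  then show ?thesis by auto
qed

lemma deadbeat_exists:
  assumes "controllable A (B::real^'m^'n)"
  shows "\<exists>v. \<forall>k\<ge>CARD('n). traj (A + B ** K) B z v k = 0"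
proof -
  let ?n = "CARD('n)" and ?Ac = "A + B ** K"
  obtain u where u: "traj A B 0 u ?n = - (mpow ?Ac ?n *v z)"
    using reach_all[OF assms] by blast
  define v0 where "v0 = (\<lambda>j. u j - K *v traj A B 0 u j)"
  have "traj ?Ac B 0 v0 ?n = - (mpow ?Ac ?n *v z)"
    using traj_feedback[of A B 0 u ?n K] u unfolding v0_def by simp
  then have "traj ?Ac B (z + 0) (\<lambda>k. 0 + v0 k) ?n = 0"
    using traj_add[of ?Ac B z 0 "\<lambda>_. 0" v0 ?n] by (simp add: traj_zero_input)
  then have n0: "traj ?Ac B z v0 ?n = 0" by simp
  define v where "v = (\<lambda>k. if k < ?n then v0 k else 0)"
  have agree: "traj ?Ac B z v k = traj ?Ac B z v0 k" if "k \<le> ?n" for k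
    using that by (induction k) (auto simp: v_def)
  have "traj ?Ac B z v (?n + d) = 0" for d
  proof (induction d)
    case 0 then show ?case using agree[of ?n] n0 by simp
  next
    case (Suc d) then show ?case by (simp add: v_def)
  qed
  then have "\<forall>k\<ge>?n. traj ?Ac B z v k = 0"
    by (metis le_add_diff_inverse)
  then show ?thesis by blast
qed

lemma norm_sum_scale_le:
  fixes y :: "'i::finite \<Rightarrow> 'b::real_normed_vector" and z :: "real^'i"
  shows "norm (\<Sum>i\<in>UNIV. z$i *\<^sub>R y i) \<le> norm z * (\<Sum>i\<in>UNIV. norm (y i))"
proof -
  have "norm (\<Sum>i\<in>UNIV. z$i *\<^sub>R y i) \<le> (\<Sum>i\<in>UNIV. norm (z$i *\<^sub>R y i))"
    by (rule norm_sum)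
  also have "\<dots> \<le> (\<Sum>i\<in>UNIV. norm z * norm (y i))"
    by (rule sum_mono) (simp add: mult_right_mono component_le_norm_cart)
  finally show ?thesis by (simp add: sum_distrib_left)
qed

lemma deadbeat_linear:
  assumes "controllable A (B::real^'m^'n)"
  shows "\<exists>c>0. \<exists>vdb. \<forall>z. (\<forall>k\<ge>CARD('n). traj (A + B ** K) B z (vdb z) k = 0)
            \<and> (\<forall>k\<le>N. norm (traj (A + B ** K) B z (vdb z) k) \<le> c * norm z
                     \<and> norm (vdb z k) \<le> c * norm z)"
proof -
  let ?n = "CARD('n)" and ?Ac = "A + B ** K"
  have "\<forall>i. \<exists>v. \<forall>k\<ge>?n. traj ?Ac B (axis i 1) v k = 0"
    using deadbeat_exists[OF assms] by blast
  then obtain V where V: "\<And>i k. k \<ge> ?n \<Longrightarrow> traj ?Ac B (axis i 1) (V i) k = 0"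
    by metis
  define vdb where "vdb = (\<lambda>(z::real^'n) k. \<Sum>i\<in>UNIV. z$i *\<^sub>R V i k)"
  define c where "c = 1 + (\<Sum>i\<in>UNIV. \<Sum>k\<le>N. norm (traj ?Ac B (axis i 1) (V i) k) + norm (V i k))"
  have zexp: "z = (\<Sum>i\<in>UNIV. z$i *\<^sub>R axis i 1)" for z :: "real^'n"
    using basis_expansion[of z] by (simp add: scalar_mult_eq_scaleR)
  have tr: "traj ?Ac B z (vdb z) k = (\<Sum>i\<in>UNIV. z$i *\<^sub>R traj ?Ac B (axis i 1) (V i) k)" for z k
  proof -
    have "traj ?Ac B z (vdb z) k = traj ?Ac B (\<Sum>i\<in>UNIV. z$i *\<^sub>R axis i 1) (\<lambda>k. \<Sum>i\<in>UNIV. z$i *\<^sub>R V i k) k"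
      using zexp[of z] unfolding vdb_def by simp
    also have "\<dots> = (\<Sum>i\<in>UNIV. z$i *\<^sub>R traj ?Ac B (axis i 1) (V i) k)"
      by (rule traj_sum) simp
    finally show ?thesis .
  qed
  have c_pos: "c > 0" unfolding c_def by (intro add_pos_nonneg sum_nonneg) auto
  have bnd: "(\<Sum>i\<in>UNIV. norm (traj ?Ac B (axis i 1) (V i) k)) \<le> c"
            "(\<Sum>i\<in>UNIV. norm (V i k)) \<le> c" if "k \<le> N" for k
  proof -
    have a: "norm (traj ?Ac B (axis i 1) (V i) k) + norm (V i k)
          \<le> (\<Sum>k\<le>N. norm (traj ?Ac B (axis i 1) (V i) k) + norm (V i k))" for i
      by (rule member_le_sum[where f="\<lambda>k. norm (traj ?Ac B (axis i 1) (V i) k) + norm (V i k)"])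
         (use that in auto)
    have "(\<Sum>i\<in>UNIV. norm (traj ?Ac B (axis i 1) (V i) k) + norm (V i k)) \<le> c - 1"
      unfolding c_def by (simp, rule sum_mono, rule a)
    moreover have "(\<Sum>i\<in>UNIV. norm (traj ?Ac B (axis i 1) (V i) k)) \<le> (\<Sum>i\<in>UNIV. norm (traj ?Ac B (axis i 1) (V i) k) + norm (V i k))"
      by (rule sum_mono) simp
    moreover have "(\<Sum>i\<in>UNIV. norm (V i k)) \<le> (\<Sum>i\<in>UNIV. norm (traj ?Ac B (axis i 1) (V i) k) + norm (V i k))"
      by (rule sum_mono) simp
    ultimately show "(\<Sum>i\<in>UNIV. norm (traj ?Ac B (axis i 1) (V i) k)) \<le> c"
            "(\<Sum>i\<in>UNIV. norm (V i k)) \<le> c" by linarith+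
  qed
  have "\<forall>z. (\<forall>k\<ge>?n. traj ?Ac B z (vdb z) k = 0)
            \<and> (\<forall>k\<le>N. norm (traj ?Ac B z (vdb z) k) \<le> c * norm z
                     \<and> norm (vdb z k) \<le> c * norm z)"
  proof (intro allI conjI impI)
    fix z :: "real^'n" and k assume "k \<ge> ?n"
    then show "traj ?Ac B z (vdb z) k = 0" by (simp add: tr V)
  next
    fix z :: "real^'n" and k assume k: "k \<le> N"
    have "norm (traj ?Ac B z (vdb z) k) \<le> norm z * (\<Sum>i\<in>UNIV. norm (traj ?Ac B (axis i 1) (V i) k))"
      unfolding tr by (rule norm_sum_scale_le)
    also have "\<dots> \<le> norm z * c" by (rule mult_left_mono[OF bnd(1)[OF k]]) simp
    finally show "norm (traj ?Ac B z (vdb z) k) \<le> c * norm z" by (simp add: mult.commute)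
    have "norm (vdb z k) \<le> norm z * (\<Sum>i\<in>UNIV. norm (V i k))"
      using norm_sum_scale_le[of z "\<lambda>i. V i k"] unfolding vdb_def by simp
    also have "\<dots> \<le> norm z * c" by (rule mult_left_mono[OF bnd(2)[OF k]]) simp
    finally show "norm (vdb z k) \<le> c * norm z" by (simp add: mult.commute)
  qed
  with c_pos show ?thesis by blast
qed

definition cvec :: "real^'n \<Rightarrow> complex^'n" where
  "cvec y = (\<chi> i. complex_of_real (y$i))"

lemma cmat_cvec: "cmat M *v cvec y = cvec (M *v y)"
  by (simp add: cmat_def cvec_def matrix_vector_mult_def vec_eq_iff)

lemma cvec_eq_0: "cvec y = 0 \<longleftrightarrow> y = 0"
  by (simp add: cvec_def vec_eq_iff)

lemma cmv_sum: "(A::complex^'n^'m) *v sum f I = (\<Sum>i\<in>I. A *v f i)"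
  by (simp add: matrix_vector_mult_def vec_eq_iff sum_distrib_left sum.swap[of _ I]
      sum_component)

lemma csum_smult: "(\<Sum>i\<in>I. c i *s (v::complex^'n)) = (\<Sum>i\<in>I. c i) *s v"
  by (simp add: vec_eq_iff sum_distrib_right sum_component)

lemma root_ne1:
  assumes "0 < j" "j < \<rho>"
  shows "cis (2 * pi / real \<rho>) ^ j \<noteq> 1"
proof
  assume "cis (2 * pi / real \<rho>) ^ j = 1"
  then have "cis (real j * (2 * pi / real \<rho>)) = 1" by (metis Complex.DeMoivre)
  then have "cos (real j * (2 * pi / real \<rho>)) = 1"
    by (metis Re_complex_of_real cis.sel(1) one_complex.sel(1))
  then obtain n :: int where n: "real j * (2 * pi / real \<rho>) = real_of_int n * 2 * pi"
    using cos_one_2pi_int by blast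
  have "real j = n * real \<rho>" using n assms pi_gt_zero
    by (simp add: field_simps)
  then have "int j = n * int \<rho>" by (metis of_int_eq_iff of_int_mult of_int_of_nat_eq)
  show False
  proof (cases "n \<ge> 1")
    case True
    then have "n * int \<rho> \<ge> 1 * int \<rho>" by (intro mult_right_mono) auto
    with \<open>int j = n * int \<rho>\<close> assms show False by simp
  next
    case False
    then have "n * int \<rho> \<le> 0" by (intro mult_nonpos_nonneg) auto
    with \<open>int j = n * int \<rho>\<close> assms show False by simp
  qed
qed

lemma root_pow:
  assumes "\<rho> > 0"
  shows "(cis (2 * pi / real \<rho>) ^ j) ^ \<rho> = 1"
proof -
  have "(cis (2 * pi / real \<rho>) ^ j) ^ \<rho> = cis (real (j * \<rho>) * (2 * pi / real \<rho>))"
    by (simp only: power_mult[symmetric] Complex.DeMoivre) (simp add: algebra_simps)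
  also have "real (j * \<rho>) * (2 * pi / real \<rho>) = 2 * pi * real j"
    using assms by (simp add: field_simps)
  also have "cis (2 * pi * real j) = 1" by (rule cis_multiple_2pi) simp
  finally show ?thesis .
qed

lemma root_sum:
  assumes "\<rho> > 0" "j < \<rho>"
  shows "(\<Sum>k<\<rho>. (cis (2 * pi / real \<rho>) ^ j) ^ k) = (if j = 0 then of_nat \<rho> else 0)"
proof (cases "j = 0")
  case True then show ?thesis by simp
next
  case False
  then have ne: "cis (2 * pi / real \<rho>) ^ j \<noteq> 1" using root_ne1 assms by simp
  show ?thesis using False ne root_pow[OF assms(1), of j] by (simp add: sum_gp_strict)
qed

lemma schur_no_periodic:
  assumes sch: "schur M" and rho: "\<rho> > 0" and fx: "mpow M \<rho> *v y = y"
  shows "y = 0"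
proof (rule ccontr)
  assume y0: "y \<noteq> 0"
  let ?w = "cis (2 * pi / real \<rho>)"
  define Y where "Y = (\<lambda>j. cvec (mpow M j *v y))"
  have YS: "cmat M *v Y j = Y (Suc j)" for j
    by (simp add: Y_def cmat_cvec matrix_vector_mul_assoc)
  have Yr: "Y \<rho> = Y 0" using fx by (simp add: Y_def)
  define u where "u = (\<lambda>k. \<Sum>j<\<rho>. ((?w ^ k) ^ j) *s Y j)"
  obtain m where m: "\<rho> = Suc m" using rho by (cases \<rho>) auto
  have eig: "(?w ^ k) *s (cmat M *v u k) = u k" for k
  proof -
    define f where "f = (\<lambda>j. ((?w ^ k) ^ j) *s Y j)"
    have "(?w ^ k) *s (cmat M *v u k) = (\<Sum>j<\<rho>. f (Suc j))"
      unfolding u_def f_def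
      by (simp add: cmv_sum vector_scalar_commute YS sum_cmul[symmetric] vector_smult_assoc)
    also have "\<dots> = (\<Sum>j<m. f (Suc j)) + f (Suc m)" using m by simp
    also have "f (Suc m) = f 0"
      using root_pow[OF rho, of k] Yr m by (simp add: f_def)
    also have "(\<Sum>j<m. f (Suc j)) + f 0 = (\<Sum>j<\<rho>. f j)"
      by (simp only: m sum.lessThan_Suc_shift add.commute)
    finally show ?thesis unfolding u_def f_def .
  qed
  have "(\<Sum>k<\<rho>. u k) = (\<Sum>j<\<rho>. (\<Sum>k<\<rho>. (?w ^ j) ^ k) *s Y j)"
    unfolding u_def
    by (subst sum.swap) (simp add: csum_smult power_mult[symmetric] mult.commute)
  also have "\<dots> = (\<Sum>j<\<rho>. (if j = 0 then of_nat \<rho> else 0) *s Y j)"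
    by (rule sum.cong) (simp_all add: root_sum[OF rho])
  also have "\<dots> = of_nat \<rho> *s Y 0"
    by (simp only: m sum.lessThan_Suc_shift) simp
  finally have "(\<Sum>k<\<rho>. u k) \<noteq> 0"
    using y0 rho by (simp add: Y_def cvec_eq_0)
  then obtain k where uk: "u k \<noteq> 0" by (meson sum.neutral)
  have wk: "?w ^ k \<noteq> 0" by simp
  have "cmat M *v u k = inverse (?w ^ k) *s u k"
    using arg_cong[OF eig[of k], of "\<lambda>v. inverse (?w ^ k) *s v"] wk
    by (simp add: vector_smult_assoc)
  then have "is_eigenvalue M (inverse (?w ^ k))"
    unfolding is_eigenvalue_def using uk by blast
  moreover have "cmod (inverse (?w ^ k)) = 1" by (simp add: norm_inverse norm_power)
  ultimately show False using sch unfolding schur_def by fastforce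
qed

lemma cesaro_zero:
  fixes M :: "real^'n^'n"
  assumes inj0: "\<And>x. M *v x = x \<Longrightarrow> x = 0" and bnd: "\<And>i. norm (mpow M i *v y) \<le> b"
  shows "(\<lambda>J. inverse (real (Suc J)) *\<^sub>R (\<Sum>i<Suc J. mpow M i *v y)) \<longlonglongrightarrow> 0"
proof -
  define f where "f = (\<lambda>x. (mat 1 - M) *v x)"
  have fx: "f x = x - M *v x" for x by (simp add: f_def matrix_vector_mult_diff_rdistrib)
  have lf: "linear f" unfolding f_def by simp
  have "inj f"
  proof (rule injI)
    fix x x' assume "f x = f x'"
    then have e: "x - M *v x = x' - M *v x'" by (simp only: fx)
    have "M *v (x - x') = M *v x - M *v x'" by (rule matrix_vector_mult_diff_distrib)
    also have "\<dots> = x - x'" using e by (simp add: algebra_simps)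
    finally have "x - x' = 0" by (rule inj0)
    then show "x = x'" by simp
  qed
  then obtain c where c: "c > 0" "\<And>x. c * norm x \<le> norm (f x)"
    using linear_inj_bounded_below_pos[OF lf] by blast
  define m where "m = (\<lambda>J. inverse (real (Suc J)) *\<^sub>R (\<Sum>i<Suc J. mpow M i *v y))"
  have fm: "f (m J) = inverse (real (Suc J)) *\<^sub>R (y - mpow M (Suc J) *v y)" for J
  proof -
    have "f (m J) = inverse (real (Suc J)) *\<^sub>R (\<Sum>i<Suc J. f (mpow M i *v y))"
      unfolding m_def f_def by (simp only: matrix_vector_mult_scaleR mv_sum)
    also have "(\<Sum>i<Suc J. f (mpow M i *v y)) = (\<Sum>i<Suc J. mpow M i *v y) - (\<Sum>i<Suc J. mpow M (Suc i) *v y)"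
      by (simp only: fx mpow_vec_Suc' sum_subtractf)
    also have "\<dots> = y - mpow M (Suc J) *v y"
    proof -
      have "(\<Sum>i<Suc J. mpow M (Suc i) *v y - mpow M i *v y) = mpow M (Suc J) *v y - mpow M 0 *v y"
        by (rule sum_lessThan_telescope)
      then have "(\<Sum>i<Suc J. mpow M (Suc i) *v y) - (\<Sum>i<Suc J. mpow M i *v y) = mpow M (Suc J) *v y - y"
        by (simp only: sum_subtractf mpow.simps(1) matrix_vector_mul_lid)
      then show ?thesis by (metis minus_diff_eq)
    qed
    finally show ?thesis .
  qed
  have nb: "norm (m J) \<le> inverse c * (inverse (real (Suc J)) * (norm y + b))" for J
  proof -
    have "c * norm (m J) \<le> norm (f (m J))" by (rule c(2))
    also have "\<dots> \<le> inverse (real (Suc J)) * (norm y + b)"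
      unfolding fm using norm_triangle_ineq4[of y "mpow M (Suc J) *v y"] bnd[of "Suc J"]
      by (simp add: mult_left_mono)
    finally have "c * norm (m J) \<le> inverse (real (Suc J)) * (norm y + b)" .
    then have "norm (m J) \<le> (inverse (real (Suc J)) * (norm y + b)) / c"
      using c(1) by (simp add: pos_le_divide_eq mult.commute)
    then show ?thesis by (simp add: divide_inverse mult.commute)
  qed
  have lim: "(\<lambda>J. inverse c * (inverse (real (Suc J)) * (norm y + b))) \<longlonglongrightarrow> 0"
    by (intro tendsto_mult_left_zero tendsto_mult_right_zero LIMSEQ_inverse_real_of_nat)
  have "m \<longlonglongrightarrow> 0"
    by (rule Lim_null_comparison[OF always_eventually lim]) (use nb in blast)
  then show ?thesis unfolding m_def .
qed

lemma ss_limit: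
  fixes M :: "real^'n^'n" and K :: "real^'n^'m" and F :: "((real^'n) \<times> (real^'m)) set"
  assumes F: "closed F" "convex F" "bounded F"
    and inj0: "\<And>x. M *v x = x \<Longrightarrow> x = 0"
    and mem: "\<And>i. (q1 + mpow M i *v y, q2 + K *v (mpow M i *v y)) \<in> F"
  shows "(q1, q2) \<in> F"
proof -
  obtain bF where bF: "\<And>z. z \<in> F \<Longrightarrow> norm z \<le> bF" using F(3) unfolding bounded_iff by blast
  have bnd: "norm (mpow M i *v y) \<le> bF + norm q1" for i
  proof -
    have "norm (q1 + mpow M i *v y) \<le> bF"
      using bF[OF mem[of i]] norm_fst_le[of "q1 + mpow M i *v y" "q2 + K *v (mpow M i *v y)"] by simp
    then show ?thesis using norm_triangle_ineq4[of "q1 + mpow M i *v y" q1] by simp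
  qed
  define m where "m = (\<lambda>J. inverse (real (Suc J)) *\<^sub>R (\<Sum>i<Suc J. mpow M i *v y))"
  have m0: "m \<longlonglongrightarrow> 0" unfolding m_def by (rule cesaro_zero[OF inj0 bnd])
  define a where "a = (\<lambda>J. (q1 + m J, q2 + K *v m J))"
  have a_mem: "a J \<in> F" for J
  proof -
    define r where "r = inverse (real (Suc J))"
    have mJ: "m J = r *\<^sub>R (\<Sum>i<Suc J. mpow M i *v y)" unfolding m_def r_def by simp
    define p where "p = (\<lambda>i. (q1 + mpow M i *v y, q2 + K *v (mpow M i *v y)))"
    have sr: "(\<Sum>i<Suc J. r) = 1" unfolding r_def by simp
    have r0: "\<And>i. i \<in> {..<Suc J} \<Longrightarrow> r \<ge> 0" unfolding r_def by simp
    have pm: "\<And>i. i \<in> {..<Suc J} \<Longrightarrow> p i \<in> F" unfolding p_def by (rule mem)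
    have cs: "(\<Sum>i<Suc J. r *\<^sub>R p i) \<in> F"
      by (rule convex_sum[OF finite_lessThan F(2) sr r0 pm])
    have s1: "(\<Sum>i<Suc J. r *\<^sub>R v) = v" for v :: "'x::real_vector"
      unfolding r_def by (simp only: sum_constant_scaleR scaleR_scaleR) simp
    have "(\<Sum>i<Suc J. r *\<^sub>R p i) = a J"
    proof (rule prod_eqI)
      show "fst (\<Sum>i<Suc J. r *\<^sub>R p i) = fst (a J)"
      proof -
        have "fst (\<Sum>i<Suc J. r *\<^sub>R p i) = (\<Sum>i<Suc J. r *\<^sub>R q1 + r *\<^sub>R (mpow M i *v y))"
          by (simp only: fst_sum p_def fst_scaleR fst_conv scaleR_add_right)
        also have "\<dots> = q1 + (\<Sum>i<Suc J. r *\<^sub>R (mpow M i *v y))"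
          by (simp only: sum.distrib s1)
        also have "(\<Sum>i<Suc J. r *\<^sub>R (mpow M i *v y)) = m J"
          by (simp only: mJ scaleR_sum_right)
        finally show ?thesis by (simp only: a_def fst_conv)
      qed
      show "snd (\<Sum>i<Suc J. r *\<^sub>R p i) = snd (a J)"
      proof -
        have "snd (\<Sum>i<Suc J. r *\<^sub>R p i) = (\<Sum>i<Suc J. r *\<^sub>R q2 + r *\<^sub>R (K *v (mpow M i *v y)))"
          by (simp only: snd_sum p_def snd_scaleR snd_conv scaleR_add_right)
        also have "\<dots> = q2 + (\<Sum>i<Suc J. r *\<^sub>R (K *v (mpow M i *v y)))"
          by (simp only: sum.distrib s1)
        also have "(\<Sum>i<Suc J. r *\<^sub>R (K *v (mpow M i *v y))) = K *v m J"
          by (simp only: mJ mv_sum matrix_vector_mult_scaleR) (rule scaleR_right.sum[symmetric])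
        finally show ?thesis by (simp only: a_def snd_conv)
      qed
    qed
    with cs show ?thesis by simp
  qed
  have "a \<longlonglongrightarrow> (q1 + 0, q2 + K *v 0)"
    unfolding a_def
    by (intro tendsto_Pair tendsto_add tendsto_const m0)
       (rule bounded_linear.tendsto[OF _ m0], simp add: linear_linear[symmetric])
  then have "a \<longlonglongrightarrow> (q1, q2)" by simp
  then show ?thesis using closed_sequentially[OF F(1), of a] a_mem by blast
qed

lemma qnorm2_scale: "qnorm2 M (c *\<^sub>R x) = c^2 * qnorm2 M (x::real^'n)"
  by (simp add: qnorm2_def matrix_vector_mult_scaleR power2_eq_square)

lemma qnorm2_nonneg: "sym_pos_def M \<Longrightarrow> 0 \<le> qnorm2 M x"
  unfolding sym_pos_def_def qnorm2_def by (cases "x = 0") (auto intro: less_imp_le)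

lemma qnorm2_upper: "\<exists>k\<ge>0. \<forall>x. qnorm2 M x \<le> k * norm (x::real^'n)^2"
proof -
  obtain b where b: "b > 0" "\<And>x. norm (M *v x) \<le> b * norm x"
    using linear_bounded_pos[OF matrix_vector_mul_linear[of M]] by blast
  have "qnorm2 M x \<le> b * norm x^2" for x
  proof -
    have "qnorm2 M x \<le> norm x * norm (M *v x)"
      unfolding qnorm2_def by (metis norm_cauchy_schwarz)
    also have "\<dots> \<le> norm x * (b * norm x)" by (rule mult_left_mono[OF b(2)]) simp
    finally show ?thesis by (simp add: power2_eq_square mult_ac)
  qed
  then show ?thesis using b(1) by (intro exI[of _ b]) auto
qed

lemma pd_lower:
  assumes "sym_pos_def M"
  shows "\<exists>m>0. \<forall>x. m * norm (x::real^'n)^2 \<le> qnorm2 M x"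
proof -
  have ne: "sphere (0::real^'n) 1 \<noteq> {}"
    by (simp add: sphere_def) (metis norm_axis_1)
  have cont: "continuous_on (sphere (0::real^'n) 1) (qnorm2 M)"
    unfolding qnorm2_def by (intro continuous_intros)
  obtain x0 where x0: "x0 \<in> sphere 0 1" "\<And>y. y \<in> sphere 0 1 \<Longrightarrow> qnorm2 M x0 \<le> qnorm2 M y"
    using continuous_attains_inf[OF compact_sphere ne cont] by blast
  have "x0 \<noteq> 0" using x0(1) by auto
  then have pos: "qnorm2 M x0 > 0"
    using assms unfolding sym_pos_def_def qnorm2_def by auto
  have "qnorm2 M x0 * norm x^2 \<le> qnorm2 M x" for x
  proof (cases "x = 0")
    case True then show ?thesis by (simp add: qnorm2_def)
  next
    case False
    let ?y = "inverse (norm x) *\<^sub>R x"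
    have "?y \<in> sphere 0 1" using False by simp
    then have "qnorm2 M x0 \<le> qnorm2 M ?y" by (rule x0(2))
    also have "\<dots> = inverse (norm x)^2 * qnorm2 M x" by (rule qnorm2_scale)
    finally have "qnorm2 M x0 * norm x^2 \<le> inverse (norm x)^2 * qnorm2 M x * norm x^2"
      by (simp add: mult_right_mono)
    also have "\<dots> = qnorm2 M x" using False by (simp add: field_simps)
    finally show ?thesis .
  qed
  then show ?thesis using pos by blast
qed

lemma inner_transpose: "(a::real^'n) \<bullet> (transpose X *v b) = (X *v a) \<bullet> b"
  by (metis inner_commute dot_lmul_matrix transpose_matrix_vector)

lemma qnorm2_congr: "qnorm2 (transpose X ** T0 ** X) a = qnorm2 T0 (X *v (a::real^'n))"
  by (simp only: qnorm2_def matrix_vector_mul_assoc[symmetric] inner_transpose)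

lemma qnorm2_sum: "finite I \<Longrightarrow> qnorm2 (\<Sum>k\<in>I. M k) a = (\<Sum>k\<in>I. qnorm2 (M k) (a::real^'n))"
  by (induction I rule: finite_induct) (simp_all add: qnorm2_def matrix_vector_mult_add_rdistrib inner_add_right)

lemma qnorm2_add: "qnorm2 (M1 + M2) a = qnorm2 M1 a + qnorm2 M2 (a::real^'n)"
  by (simp add: qnorm2_def matrix_vector_mult_add_rdistrib inner_add_right)

lemma qnorm2_diff: "qnorm2 (M1 - M2) a = qnorm2 M1 a - qnorm2 M2 (a::real^'n)"
  by (simp add: qnorm2_def matrix_vector_mult_diff_rdistrib inner_diff_right)

lemma qnorm2_zero_mat: "qnorm2 0 (a::real^'n) = 0"
  by (simp add: qnorm2_def)

lemma lyap_identity: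
  assumes "transpose Ac ** P ** Ac - P + Q = 0"
  shows "qnorm2 P (Ac *v z) + qnorm2 Q z = qnorm2 P (z::real^'n)"
proof -
  have "qnorm2 (transpose Ac ** P ** Ac - P + Q) z = 0" using assms by (simp add: qnorm2_zero_mat)
  then show ?thesis by (simp add: qnorm2_add qnorm2_diff qnorm2_congr)
qed

lemma T_invariant:
  assumes T_def: "T = (\<Sum>k\<in>{1..\<rho>}. transpose (mpow S k) ** T0 ** mpow S k)"
    and per: "mpow S \<rho> = mat 1" and rho: "\<rho> > 0"
  shows "qnorm2 T (S *v a) = qnorm2 T (a::real^'p)"
proof -
  define g where "g = (\<lambda>k. qnorm2 T0 (mpow S k *v a))"
  have Tq: "qnorm2 T b = (\<Sum>k\<in>{1..\<rho>}. qnorm2 T0 (mpow S k *v b))" for b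
    unfolding T_def by (simp add: qnorm2_sum qnorm2_congr)
  have "qnorm2 T (S *v a) = (\<Sum>k\<in>{1..\<rho>}. g (Suc k))"
    unfolding Tq g_def by (simp add: mpow_vec_Suc)
  also have "\<dots> = (\<Sum>k\<in>{Suc 1..Suc \<rho>}. g k)"
    by (rule sum.shift_bounds_cl_Suc_ivl[symmetric])
  also have "\<dots> = (\<Sum>k\<in>{Suc 1..\<rho>}. g k) + g (Suc \<rho>)"
    using rho by (simp add: sum.cl_ivl_Suc)
  also have "g (Suc \<rho>) = g 1"
    unfolding g_def by (simp add: per)
  also have "(\<Sum>k\<in>{Suc 1..\<rho>}. g k) + g 1 = (\<Sum>k\<in>{1..\<rho>}. g k)"
    using rho by (simp add: sum.atLeast_Suc_atMost)
  finally show ?thesis unfolding Tq g_def .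
qed

lemma traj_cong: "(\<And>j. j < k \<Longrightarrow> v j = v' j) \<Longrightarrow> traj M B z v k = traj M B z v' k"
  by (induction k) auto

lemma traj_shift: "traj M B (traj M B d v 1) (\<lambda>k. v (Suc k)) k = traj M B d v (Suc k)"
  by (induction k) auto

locale mpcloc =
  fixes A :: "real^'n^'n" and B :: "real^'m^'n" and K :: "real^'n^'m"
    and S :: "real^'p^'p" and Pim :: "real^'p^'n" and \<Gamma> :: "real^'p^'m" and L :: "real^'p^'m"
    and \<epsilon> :: real and Z :: "((real^'n) \<times> (real^'m)) set" and N :: nat and \<rho> :: nat
  assumes Zconv: "convex Z" and Zcomp: "compact Z" and Zint: "0 \<in> interior Z"
    and sch: "schur (A + B ** K)" and rho: "\<rho> > 0" and per: "mpow S \<rho> = mat 1"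
    and reg1: "A ** Pim + B ** \<Gamma> = Pim ** S" and Ldef: "L = \<Gamma> - K ** Pim"
    and eps: "0 < \<epsilon>" "\<epsilon> < 1"
    and hor: "N \<ge> CARD('n)"
begin

abbreviation "Ac \<equiv> A + B ** K"

definition "Zs = (\<lambda>z. (1 - \<epsilon>) *\<^sub>R z) ` Z"
definition "sp w k = (Pim *v (mpow S k *v w), \<Gamma> *v (mpow S k *v w))"
definition "adm w d \<longleftrightarrow> (\<forall>k. sp w k + (mpow Ac k *v d, K *v (mpow Ac k *v d)) \<in> Zs)"

lemma Npos: "N > 0"
proof -
  have "0 < CARD('n)" by simp
  then show ?thesis using hor by linarith
qed

lemma reg1_v: "A *v (Pim *v x) + B *v (\<Gamma> *v x) = Pim *v (S *v x)"
  using arg_cong[OF reg1, of "\<lambda>M. M *v x"]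
  by (simp add: matrix_vector_mult_add_rdistrib matrix_vector_mul_assoc)

lemma AcPim_v: "Ac *v (Pim *v x) + B *v (L *v x) = Pim *v (S *v x)"
  using reg1_v[of x]
  by (simp add: Ldef matrix_vector_mult_add_rdistrib matrix_vector_mult_diff_rdistrib
      matrix_vector_mul_assoc[symmetric] algebra_simps)

lemma KPimL_v: "K *v (Pim *v x) + L *v x = \<Gamma> *v x"
  by (simp add: Ldef matrix_vector_mult_diff_rdistrib matrix_vector_mul_assoc[symmetric])

lemma pred_decomp:
  "pred_state Ac B L S x wb v k = Pim *v (mpow S k *v wb) + traj Ac B (x - Pim *v wb) v k"
proof (induction k)
  case 0 then show ?case by simp
next
  case (Suc k)
  have "pred_state Ac B L S x wb v (Suc k)
      = (Ac *v (Pim *v (mpow S k *v wb)) + B *v (L *v (mpow S k *v wb)))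
        + (Ac *v traj Ac B (x - Pim *v wb) v k + B *v v k)"
    using Suc by (simp add: matrix_vector_right_distrib algebra_simps)
  also have "\<dots> = Pim *v (mpow S (Suc k) *v wb) + traj Ac B (x - Pim *v wb) v (Suc k)"
    by (simp only: AcPim_v mpow_vec_Suc' traj.simps)
  finally show ?case .
qed

lemma cl_state_eq: "cl_state Ac B L S x w k = pred_state Ac B L S x w (\<lambda>_. 0) k"
  by (induction k) simp_all

lemma pair_eq: "(Pim *v (mpow S k *v w) + z, K *v (Pim *v (mpow S k *v w) + z) + L *v (mpow S k *v w) + u)
   = sp w k + (z, K *v z + u)"
  using KPimL_v[of "mpow S k *v w"]
  by (simp add: sp_def matrix_vector_right_distrib algebra_simps)

lemma Oinf_char: "(x, w) \<in> O_inf A B K L S \<epsilon> Z \<longleftrightarrow> adm w (x - Pim *v w)"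
proof -
  have "(cl_state Ac B L S x w k, K *v cl_state Ac B L S x w k + L *v (mpow S k *v w))
     = sp w k + (mpow Ac k *v (x - Pim *v w), K *v (mpow Ac k *v (x - Pim *v w)))" for k
    using pair_eq[of k w "mpow Ac k *v (x - Pim *v w)" 0]
    by (simp add: cl_state_eq pred_decomp traj_zero_input)
  then show ?thesis unfolding O_inf_def adm_def Zs_def by simp
qed

abbreviation "zt x wb v \<equiv> traj Ac B (x - Pim *v wb) v"

lemma feas_char:
  "qp_feasible_for A B K L S \<epsilon> Z N x wb v \<longleftrightarrow>
     (\<forall>k<N. sp wb k + (zt x wb v k, K *v zt x wb v k + v k) \<in> Z)
   \<and> adm (mpow S N *v wb) (zt x wb v N)"
proof -
  have "(pred_state Ac B L S x wb v k, K *v pred_state Ac B L S x wb v k + L *v (mpow S k *v wb) + v k)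
     = sp wb k + (zt x wb v k, K *v zt x wb v k + v k)" for k
    by (simp only: pred_decomp pair_eq)
  moreover have "pred_state Ac B L S x wb v N - Pim *v (mpow S N *v wb) = zt x wb v N"
    by (simp add: pred_decomp)
  ultimately show ?thesis unfolding qp_feasible_for_def Oinf_char by simp
qed

lemma cost_char:
  "qp_cost A B K L S Pim T Q R P N x w wb v =
     qnorm2 T (wb - w) + (\<Sum>k<N. qnorm2 Q (zt x wb v k)) + (\<Sum>k<N. qnorm2 R (v k))
     + qnorm2 P (zt x wb v N)"
  unfolding qp_cost_def by (simp add: pred_decomp)

lemma Zs_sub: "Zs \<subseteq> Z"
proof
  fix a assume "a \<in> Zs"
  then obtain z where z: "z \<in> Z" "a = (1 - \<epsilon>) *\<^sub>R z" unfolding Zs_def by auto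
  have "0 \<in> Z" using Zint interior_subset by blast
  have "(1 - \<epsilon>) *\<^sub>R z + \<epsilon> *\<^sub>R 0 \<in> Z"
    using convexD[OF Zconv z(1) \<open>0 \<in> Z\<close>, of "1 - \<epsilon>" \<epsilon>] eps by simp
  then show "a \<in> Z" using z by simp
qed

lemma Zs_props: "closed Zs" "convex Zs" "bounded Zs"
  unfolding Zs_def
  using compact_scaling[OF Zcomp] convex_scaling[OF Zconv] compact_imp_closed compact_imp_bounded
  by auto

lemma ball_in_Z: "\<exists>r>0. ball 0 r \<subseteq> Z"
  using Zint by (meson mem_interior)

lemma margin:
  assumes "a \<in> Zs" "ball 0 r \<subseteq> Z" "norm p < \<epsilon> * r"
  shows "a + p \<in> Z"
proof -
  obtain z where z: "z \<in> Z" "a = (1 - \<epsilon>) *\<^sub>R z" using assms(1) unfolding Zs_def by auto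
  have "norm (inverse \<epsilon> *\<^sub>R p) < r"
    using assms(3) eps by (simp add: field_simps)
  then have pz: "inverse \<epsilon> *\<^sub>R p \<in> Z" using assms(2) by auto
  have "(1 - \<epsilon>) *\<^sub>R z + \<epsilon> *\<^sub>R (inverse \<epsilon> *\<^sub>R p) \<in> Z"
    using convexD[OF Zconv z(1) pz, of "1 - \<epsilon>" \<epsilon>] eps by simp
  then show ?thesis using z eps by simp
qed

lemma sp_Suc: "sp (S *v w) k = sp w (Suc k)"
  by (simp add: sp_def mpow_vec_Suc)

lemma sp_pow: "sp (mpow S j *v w) k = sp w (k + j)"
  by (simp add: sp_def mpow_vec_add)

lemma sp_per: "sp w (k + \<rho> * j) = sp w k"
  by (simp add: sp_def mpow_periodic[OF per])

lemma sp_comb: "sp (a *\<^sub>R w1 + b *\<^sub>R w2) k = a *\<^sub>R sp w1 k + b *\<^sub>R sp w2 k"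
  by (simp add: sp_def matrix_vector_right_distrib matrix_vector_mult_scaleR)

lemma adm_shift: "adm w d \<Longrightarrow> adm (S *v w) (Ac *v d)"
  unfolding adm_def
proof
  fix k assume "\<forall>k. sp w k + (mpow Ac k *v d, K *v (mpow Ac k *v d)) \<in> Zs"
  then have "sp w (Suc k) + (mpow Ac (Suc k) *v d, K *v (mpow Ac (Suc k) *v d)) \<in> Zs" by blast
  then show "sp (S *v w) k + (mpow Ac k *v (Ac *v d), K *v (mpow Ac k *v (Ac *v d))) \<in> Zs"
    by (simp add: sp_Suc mpow_vec_Suc)
qed

lemma adm_ss:
  assumes "adm w d"
  shows "sp w k \<in> Zs"
proof -
  define M where "M = mpow Ac \<rho>"
  have inj0: "x = 0" if "M *v x = x" for x
    using schur_no_periodic[OF sch rho] that unfolding M_def by blast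
  have mem: "(fst (sp w k) + mpow M i *v (mpow Ac k *v d), snd (sp w k) + K *v (mpow M i *v (mpow Ac k *v d))) \<in> Zs" for i
  proof -
    have "sp w (k + \<rho> * i) + (mpow Ac (k + \<rho> * i) *v d, K *v (mpow Ac (k + \<rho> * i) *v d)) \<in> Zs"
      using assms unfolding adm_def by blast
    moreover have "mpow Ac (k + \<rho> * i) = mpow M i ** mpow Ac k"
      unfolding M_def by (simp only: add.commute[of k] mpow_add mpow_mult)
    ultimately show ?thesis
      by (simp add: mpow_periodic[OF per] matrix_vector_mul_assoc sp_def)
  qed
  have "(fst (sp w k), snd (sp w k)) \<in> Zs"
    by (rule ss_limit[OF Zs_props inj0 mem])
  then show ?thesis by simp
qed

lemma adm_zero: "(\<And>k. sp w k \<in> Zs) \<Longrightarrow> adm w 0"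
  unfolding adm_def by (simp add: zero_prod_def[symmetric])

lemma feas_ss:
  assumes "qp_feasible_for A B K L S \<epsilon> Z N x wb v"
  shows "sp wb k \<in> Zs"
proof -
  have "adm (mpow S N *v wb) (zt x wb v N)" using assms feas_char by blast
  then have "sp (mpow S N *v wb) (k + \<rho> * N - N) \<in> Zs" by (rule adm_ss)
  moreover have "k + \<rho> * N - N + N = k + \<rho> * N"
    using rho by (simp add: le_add2 mult_le_mono1 Suc_leI le_trans[of N "\<rho> * N"])
  ultimately show ?thesis by (simp add: sp_pow sp_per)
qed

end

context mpcloc begin

lemma x1_eq: "(A *v x + B *v (K *v x + L *v wb + v 0)) - Pim *v (S *v wb) = traj Ac B (x - Pim *v wb) v 1"
proof -
  have "A *v x + B *v (K *v x + L *v wb + v 0) = Ac *v x + B *v (L *v wb) + B *v v 0"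
    by (simp add: matrix_vector_mult_add_rdistrib matrix_vector_right_distrib matrix_vector_mul_assoc)
  also have "Ac *v x = Ac *v (Pim *v wb) + Ac *v (x - Pim *v wb)"
    by (simp add: matrix_vector_mult_diff_distrib)
  finally have "A *v x + B *v (K *v x + L *v wb + v 0) = (Ac *v (Pim *v wb) + B *v (L *v wb)) + (Ac *v (x - Pim *v wb) + B *v v 0)"
    by (simp add: algebra_simps)
  then show ?thesis by (simp add: AcPim_v)
qed

lemma shift_facts:
  fixes x :: "real^'n" and wb :: "real^'p" and v :: "nat \<Rightarrow> real^'m"
  assumes N: "N = Suc M"
  defines "x1 \<equiv> A *v x + B *v (K *v x + L *v wb + v 0)"
  defines "vsh \<equiv> (\<lambda>k. if k < M then v (Suc k) else 0)"
  shows "\<And>k. k \<le> M \<Longrightarrow> zt x1 (S *v wb) vsh k = zt x wb v (Suc k)"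
    and "zt x1 (S *v wb) vsh N = Ac *v zt x wb v N"
proof -
  have d1: "x1 - Pim *v (S *v wb) = traj Ac B (x - Pim *v wb) v 1"
    unfolding x1_def by (rule x1_eq)
  show zs: "zt x1 (S *v wb) vsh k = zt x wb v (Suc k)" if "k \<le> M" for k
  proof -
    have "zt x1 (S *v wb) vsh k = traj Ac B (traj Ac B (x - Pim *v wb) v 1) (\<lambda>k. v (Suc k)) k"
      unfolding d1 by (rule traj_cong) (use that in \<open>auto simp: vsh_def\<close>)
    then show ?thesis by (simp only: traj_shift)
  qed
  show "zt x1 (S *v wb) vsh N = Ac *v zt x wb v N"
    unfolding N using zs[of M] by (simp add: vsh_def)
qed

lemma shift_feasible:
  assumes feas: "qp_feasible_for A B K L S \<epsilon> Z N x wb v" and N: "N = Suc M"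
  shows "qp_feasible_for A B K L S \<epsilon> Z N (A *v x + B *v (K *v x + L *v wb + v 0)) (S *v wb)
           (\<lambda>k. if k < M then v (Suc k) else 0)"
proof -
  let ?x1 = "A *v x + B *v (K *v x + L *v wb + v 0)"
  let ?vsh = "\<lambda>k. if k < M then v (Suc k) else 0"
  note sf = shift_facts[OF N, where x=x and wb=wb and v=v]
  have c: "\<forall>k<N. sp wb k + (zt x wb v k, K *v zt x wb v k + v k) \<in> Z"
    and t: "adm (mpow S N *v wb) (zt x wb v N)"
    using feas unfolding feas_char by auto
  have "sp (S *v wb) k + (zt ?x1 (S *v wb) ?vsh k, K *v zt ?x1 (S *v wb) ?vsh k + ?vsh k) \<in> Z" if k: "k < N" for k
  proof (cases "k < M")
    case True
    then show ?thesis using c[rule_format, of "Suc k"] N sf(1)[of k] by (simp add: sp_Suc)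
  next
    case False
    then have kM: "k = M" using k N by simp
    have "sp (mpow S N *v wb) 0 + (mpow Ac 0 *v zt x wb v N, K *v (mpow Ac 0 *v zt x wb v N)) \<in> Zs"
      using t unfolding adm_def by blast
    then have "sp wb N + (zt x wb v N, K *v zt x wb v N) \<in> Z"
      using Zs_sub by (auto simp: sp_pow)
    then show ?thesis using kM N sf(1)[of M] by (simp add: sp_Suc)
  qed
  moreover have "adm (mpow S N *v (S *v wb)) (zt ?x1 (S *v wb) ?vsh N)"
  proof -
    have "mpow S N *v (S *v wb) = S *v (mpow S N *v wb)" by (simp add: mpow_vec_Suc mpow_vec_Suc')
    then show ?thesis using adm_shift[OF t] sf(2) by simp
  qed
  ultimately show ?thesis unfolding feas_char by blast
qed

lemma shift_cost:
  assumes N: "N = Suc M"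
    and Tinv: "\<And>a. qnorm2 T (S *v a) = qnorm2 T a"
    and lyapid: "\<And>z. qnorm2 P (Ac *v z) + qnorm2 Q z = qnorm2 P z"
  shows "qp_cost A B K L S Pim T Q R P N (A *v x + B *v (K *v x + L *v wb + v 0)) (S *v w) (S *v wb)
           (\<lambda>k. if k < M then v (Suc k) else 0)
         + qnorm2 Q (x - Pim *v wb) + qnorm2 R (v 0) = qp_cost A B K L S Pim T Q R P N x w wb v"
proof -
  let ?x1 = "A *v x + B *v (K *v x + L *v wb + v 0)"
  let ?vsh = "\<lambda>k. if k < M then v (Suc k) else 0"
  let ?z = "zt x wb v" and ?z' = "zt ?x1 (S *v wb) ?vsh"
  note sf = shift_facts[OF N, where x=x and wb=wb and v=v]
  have T: "qnorm2 T (S *v wb - S *v w) = qnorm2 T (wb - w)"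
    using Tinv[of "wb - w"] by (simp add: matrix_vector_mult_diff_distrib)
  have sQ: "(\<Sum>k<N. qnorm2 Q (?z' k)) = (\<Sum>k<M. qnorm2 Q (?z (Suc k))) + qnorm2 Q (?z N)"
    unfolding N by (simp add: sf(1)[simplified N])
  have sQ0: "(\<Sum>k<N. qnorm2 Q (?z k)) = qnorm2 Q (?z 0) + (\<Sum>k<M. qnorm2 Q (?z (Suc k)))"
    unfolding N by (rule sum.lessThan_Suc_shift)
  have sR: "(\<Sum>k<N. qnorm2 R (?vsh k)) = (\<Sum>k<M. qnorm2 R (v (Suc k)))"
    unfolding N by (simp add: qnorm2_def)
  have sR0: "(\<Sum>k<N. qnorm2 R (v k)) = qnorm2 R (v 0) + (\<Sum>k<M. qnorm2 R (v (Suc k)))"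
    unfolding N by (rule sum.lessThan_Suc_shift)
  have P: "qnorm2 P (?z' N) + qnorm2 Q (?z N) = qnorm2 P (?z N)"
    using sf(2) lyapid by simp
  show ?thesis
    unfolding cost_char using T sQ sQ0 sR sR0 P by simp
qed

end

lemma arith_improve:
  fixes D l c2 kk nz :: real
  assumes "D \<ge> 0" "l > 0" "c2 \<ge> 0" "kk \<ge> 0" "l * (1 + 2*c2*kk) \<le> 1"
    "D \<le> (1-l)^2 * D + c2 * (2 * nz^2 + 2 * l^2 * kk * D)"
  shows "l * D \<le> 2 * c2 * nz^2"
proof -
  have h3: "l*D*(l*(1+2*c2*kk)) \<le> l*D*1"
    by (rule mult_left_mono) (use assms in auto)
  have e1: "(1-l)^2 * D + c2 * (2 * nz^2 + 2 * l^2 * kk * D) = D - 2*(l*D) + l*D*(l*(1+2*c2*kk)) + 2*c2*nz^2"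
    by (simp add: power2_eq_square algebra_simps)
  show ?thesis using assms(6) h3 unfolding e1 by linarith
qed

lemma sq_sum_le: "(a + b)^2 \<le> 2 * a^2 + 2 * (b::real)^2"
proof -
  have "0 \<le> (a - b)^2" by simp
  then show ?thesis by (simp add: power2_eq_square algebra_simps)
qed

context mpcloc begin

lemma improve:
  assumes ctrb: "controllable A B"
    and Tlow: "mT > 0" "\<And>e. mT * norm e^2 \<le> qnorm2 T e"
    and Qpd: "sym_pos_def Q" and Rpd: "sym_pos_def R" and Ppd: "sym_pos_def P"
  shows "\<exists>\<eta>>0. \<exists>l>0. \<exists>c. \<forall>x w wb v. qp_optimal A B K L S Pim T Q R P \<epsilon> Z N x w wb v
            \<and> (\<forall>k. sp w k \<in> Zs) \<and> norm (x - Pim *v wb) < \<eta>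
            \<longrightarrow> l * qnorm2 T (wb - w) \<le> c * norm (x - Pim *v wb)^2"
proof -
  obtain r where r: "r > 0" "ball 0 r \<subseteq> Z" using ball_in_Z by blast
  obtain bZ0 where bZ0: "\<And>z. z \<in> Zs \<Longrightarrow> norm z \<le> bZ0"
    using Zs_props(3) unfolding bounded_iff by blast
  define bZ where "bZ = max bZ0 0"
  have bZ: "\<And>z. z \<in> Zs \<Longrightarrow> norm z \<le> bZ" "bZ \<ge> 0"
    using bZ0 unfolding bZ_def by force+
  obtain c1 vdb where c1: "c1 > 0" and vdb:
    "\<And>z. \<forall>k\<ge>CARD('n). traj Ac B z (vdb z) k = 0"
    "\<And>z k. k \<le> N \<Longrightarrow> norm (traj Ac B z (vdb z) k) \<le> c1 * norm z \<and> norm (vdb z k) \<le> c1 * norm z"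
    using deadbeat_linear[OF ctrb, of K N] by blast
  obtain kK where kK: "kK > 0" "\<And>y. norm (K *v y) \<le> kK * norm y"
    using linear_bounded_pos[OF matrix_vector_mul_linear[of K]] by blast
  obtain kP where kP: "kP > 0" "\<And>y. norm (Pim *v y) \<le> kP * norm y"
    using linear_bounded_pos[OF matrix_vector_mul_linear[of Pim]] by blast
  obtain kQ where kQ: "kQ \<ge> 0" "\<And>y. qnorm2 Q y \<le> kQ * norm y^2" using qnorm2_upper by blast
  obtain kR where kR: "kR \<ge> 0" "\<And>y. qnorm2 R y \<le> kR * norm y^2" using qnorm2_upper by blast
  define c3 where "c3 = c1 + kK * c1 + c1"
  have c3: "c3 > 0" unfolding c3_def using c1 kK by (simp add: add_pos_pos)
  define c2 where "c2 = real N * (kQ + kR) * c1^2"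
  have c2: "c2 \<ge> 0" unfolding c2_def using kQ kR by simp
  define kk where "kk = kP^2 / mT"
  have kk: "kk \<ge> 0" unfolding kk_def using Tlow by simp
  have Pim_T: "norm (Pim *v e)^2 \<le> kk * qnorm2 T e" for e
  proof -
    have "norm (Pim *v e)^2 \<le> (kP * norm e)^2"
      by (rule power_mono[OF kP(2)]) simp
    also have "\<dots> = kk * (mT * norm e^2)" unfolding kk_def using Tlow(1) by (simp add: power_mult_distrib)
    also have "\<dots> \<le> kk * qnorm2 T e" by (rule mult_left_mono[OF Tlow(2) kk])
    finally show ?thesis .
  qed
  define \<eta> where "\<eta> = \<epsilon> * r / (2 * c3)"
  have \<eta>: "\<eta> > 0" unfolding \<eta>_def using eps r c3 by simp
  define l where "l = min (1/2) (min (1 / (1 + 2*c2*kk)) (\<epsilon> * r / (4 * c3 * (bZ + 1))))"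
  have lpos: "l > 0" unfolding l_def using eps r c3 c2 kk bZ(2) by (simp add: add_pos_nonneg)
  have l1: "l \<le> 1/2" unfolding l_def by simp
  have l2: "l * (1 + 2*c2*kk) \<le> 1"
  proof -
    have "l \<le> 1 / (1 + 2*c2*kk)" unfolding l_def by simp
    moreover have "1 + 2*c2*kk > 0" using c2 kk by (simp add: add_pos_nonneg)
    ultimately show ?thesis by (simp add: le_divide_eq)
  qed
  have l3: "l * (2 * bZ) \<le> \<epsilon> * r / (2 * c3)"
  proof -
    define bZ1 where "bZ1 = bZ + 1"
    have bz1: "bZ1 > 0" "bZ \<le> bZ1" unfolding bZ1_def using bZ(2) by auto
    have "l \<le> \<epsilon> * r / (4 * c3 * bZ1)" unfolding l_def bZ1_def by simp
    then have "l * (2 * bZ1) \<le> \<epsilon> * r / (4 * c3 * bZ1) * (2 * bZ1)"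
      by (rule mult_right_mono) (use bz1 in simp)
    also have "\<epsilon> * r / (4 * c3 * bZ1) * (2 * bZ1) = \<epsilon> * r / (2 * c3)"
      using bz1 c3 by (simp add: field_simps)
    finally have "l * (2 * bZ1) \<le> \<epsilon> * r / (2 * c3)" .
    moreover have "l * (2 * bZ) \<le> l * (2 * bZ1)" using lpos bz1 by simp
    ultimately show ?thesis by linarith
  qed
  have main: "l * qnorm2 T (wb - w) \<le> (2 * c2) * norm (x - Pim *v wb)^2"
    if opt: "qp_optimal A B K L S Pim T Q R P \<epsilon> Z N x w wb v" and ssw: "\<forall>k. sp w k \<in> Zs"
      and small: "norm (x - Pim *v wb) < \<eta>" for x w wb v
  proof -
    have feas: "qp_feasible_for A B K L S \<epsilon> Z N x wb v" using opt unfolding qp_optimal_def by blast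
    have ssb: "sp wb k \<in> Zs" for k by (rule feas_ss[OF feas])
    have nPwb: "norm (Pim *v wb) \<le> bZ"
      using bZ(1)[OF ssb[of 0]] norm_fst_le[of "Pim *v wb" "\<Gamma> *v wb"] by (simp add: sp_def)
    have nPw: "norm (Pim *v w) \<le> bZ"
      using bZ(1)[OF ssw[rule_format, of 0]] norm_fst_le[of "Pim *v w" "\<Gamma> *v w"] by (simp add: sp_def)
    have nPd: "norm (Pim *v (wb - w)) \<le> 2 * bZ"
      using norm_triangle_ineq4[of "Pim *v wb" "Pim *v w"] nPwb nPw
      by (simp add: matrix_vector_mult_diff_distrib)
    define z0 where "z0 = x - Pim *v wb"
    define wb' where "wb' = (1 - l) *\<^sub>R wb + l *\<^sub>R w"
    define d' where "d' = x - Pim *v wb'"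
    have d'eq: "d' = z0 + l *\<^sub>R (Pim *v (wb - w))"
      unfolding d'_def z0_def wb'_def
      by (simp add: matrix_vector_right_distrib matrix_vector_mult_diff_distrib matrix_vector_mult_scaleR algebra_simps)
    have nd': "norm d' \<le> norm z0 + l * norm (Pim *v (wb - w))"
      unfolding d'eq using norm_triangle_ineq[of z0 "l *\<^sub>R (Pim *v (wb - w))"] lpos by simp
    have nd'2: "norm d' < \<epsilon> * r / c3"
    proof -
      have "l * norm (Pim *v (wb - w)) \<le> l * (2 * bZ)" by (rule mult_left_mono[OF nPd]) (use lpos in simp)
      then have "norm d' < \<eta> + \<epsilon> * r / (2 * c3)" using nd' small l3 unfolding z0_def by linarith
      also have "\<eta> + \<epsilon> * r / (2 * c3) = \<epsilon> * r / c3" unfolding \<eta>_def by (simp add: field_simps)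
      finally show ?thesis .
    qed
    define v' where "v' = vdb d'"
    have zt': "zt x wb' (vdb d') = traj Ac B d' (vdb d')" unfolding d'_def by simp
    have zN: "zt x wb' v' N = 0" unfolding v'_def zt' using vdb(1) hor by blast
    have zb: "norm (zt x wb' v' k) \<le> c1 * norm d'" "norm (v' k) \<le> c1 * norm d'" if "k \<le> N" for k
      using vdb(2)[OF that, of d'] unfolding v'_def zt' by simp_all
    have spc: "sp wb' k \<in> Zs" for k
    proof -
      have "sp wb' k = (1 - l) *\<^sub>R sp wb k + l *\<^sub>R sp w k" unfolding wb'_def by (rule sp_comb)
      moreover have "(1 - l) *\<^sub>R sp wb k + l *\<^sub>R sp w k \<in> Zs"
        using convexD[OF Zs_props(2) ssb ssw[rule_format], of "1 - l" l] lpos l1 by simp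
      ultimately show ?thesis by simp
    qed
    have feas': "qp_feasible_for A B K L S \<epsilon> Z N x wb' v'"
      unfolding feas_char
    proof (intro conjI allI impI)
      fix k assume k: "k < N"
      let ?p = "(zt x wb' v' k, K *v zt x wb' v' k + v' k)"
      have "norm ?p \<le> norm (zt x wb' v' k) + norm (K *v zt x wb' v' k + v' k)" by (rule norm_Pair_le)
      also have "\<dots> \<le> norm (zt x wb' v' k) + (norm (K *v zt x wb' v' k) + norm (v' k))"
        using norm_triangle_ineq by simp
      also have "\<dots> \<le> c1 * norm d' + (kK * (c1 * norm d') + c1 * norm d')"
      proof -
        have zk: "norm (zt x wb' v' k) \<le> c1 * norm d'" using zb(1) k by simp
        have "kK * norm (zt x wb' v' k) \<le> kK * (c1 * norm d')"
          by (rule mult_left_mono[OF zk]) (use kK(1) in simp)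
        then have "norm (K *v zt x wb' v' k) \<le> kK * (c1 * norm d')"
          using kK(2)[of "zt x wb' v' k"] by linarith
        then show ?thesis using zb[of k] k by simp
      qed
      also have "\<dots> = c3 * norm d'" unfolding c3_def by (simp add: algebra_simps)
      also have "\<dots> < \<epsilon> * r" using nd'2 c3 by (simp add: field_simps)
      finally have "norm ?p < \<epsilon> * r" .
      then show "sp wb' k + ?p \<in> Z" by (rule margin[OF spc r(2)])
    next
      show "adm (mpow S N *v wb') (zt x wb' v' N)"
        unfolding zN by (rule adm_zero) (simp add: sp_pow spc)
    qed
    have le: "qp_cost A B K L S Pim T Q R P N x w wb v \<le> qp_cost A B K L S Pim T Q R P N x w wb' v'"
      using opt feas' unfolding qp_optimal_def by blast
    define D where "D = qnorm2 T (wb - w)"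
    have D0: "D \<ge> 0" unfolding D_def using Tlow(2)[of "wb - w"] Tlow(1) by (meson order_trans zero_le_mult_iff norm_ge_zero zero_le_power2 less_imp_le)
    have lowc: "D \<le> qp_cost A B K L S Pim T Q R P N x w wb v"
      unfolding cost_char D_def
      using qnorm2_nonneg[OF Qpd] qnorm2_nonneg[OF Rpd] qnorm2_nonneg[OF Ppd]
      by (simp add: sum_nonneg add_nonneg_nonneg)
    have "wb' - w = (1 - l) *\<^sub>R (wb - w)" unfolding wb'_def by (simp add: algebra_simps)
    then have Tc: "qnorm2 T (wb' - w) = (1-l)^2 * D" unfolding D_def by (simp add: qnorm2_scale)
    have sQ: "(\<Sum>k<N. qnorm2 Q (zt x wb' v' k)) \<le> real N * (kQ * (c1 * norm d')^2)"
    proof -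
      have "(\<Sum>k<N. qnorm2 Q (zt x wb' v' k)) \<le> of_nat (card {..<N}) * (kQ * (c1 * norm d')^2)"
      proof (rule sum_bounded_above)
        fix k assume "k \<in> {..<N}"
        then have "norm (zt x wb' v' k) \<le> c1 * norm d'" using zb(1) by simp
        then have "norm (zt x wb' v' k)^2 \<le> (c1 * norm d')^2" by (rule power_mono) simp
        then show "qnorm2 Q (zt x wb' v' k) \<le> kQ * (c1 * norm d')^2"
          using kQ(2)[of "zt x wb' v' k"] mult_left_mono[OF _ kQ(1)] by (meson order_trans)
      qed
      then show ?thesis by simp
    qed
    have sR: "(\<Sum>k<N. qnorm2 R (v' k)) \<le> real N * (kR * (c1 * norm d')^2)"
    proof -
      have "(\<Sum>k<N. qnorm2 R (v' k)) \<le> of_nat (card {..<N}) * (kR * (c1 * norm d')^2)"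
      proof (rule sum_bounded_above)
        fix k assume "k \<in> {..<N}"
        then have "norm (v' k) \<le> c1 * norm d'" using zb(2) by simp
        then have "norm (v' k)^2 \<le> (c1 * norm d')^2" by (rule power_mono) simp
        then show "qnorm2 R (v' k) \<le> kR * (c1 * norm d')^2"
          using kR(2)[of "v' k"] mult_left_mono[OF _ kR(1)] by (meson order_trans)
      qed
      then show ?thesis by simp
    qed
    have cost': "qp_cost A B K L S Pim T Q R P N x w wb' v' \<le> (1-l)^2 * D + c2 * norm d'^2"
    proof -
      have "qp_cost A B K L S Pim T Q R P N x w wb' v' = (1-l)^2 * D + (\<Sum>k<N. qnorm2 Q (zt x wb' v' k)) + (\<Sum>k<N. qnorm2 R (v' k))"
        unfolding cost_char Tc zN by (simp add: qnorm2_def)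
      also have "\<dots> \<le> (1-l)^2 * D + real N * (kQ * (c1 * norm d')^2) + real N * (kR * (c1 * norm d')^2)"
        using sQ sR by linarith
      also have "\<dots> = (1-l)^2 * D + c2 * norm d'^2"
        unfolding c2_def by (simp add: power_mult_distrib algebra_simps)
      finally show ?thesis .
    qed
    have "norm d'^2 \<le> (norm z0 + l * norm (Pim *v (wb - w)))^2"
      by (rule power_mono[OF nd']) simp
    also have "\<dots> \<le> 2 * norm z0^2 + 2 * (l * norm (Pim *v (wb - w)))^2" by (rule sq_sum_le)
    also have "(l * norm (Pim *v (wb - w)))^2 = l^2 * norm (Pim *v (wb - w))^2" by (simp add: power_mult_distrib)
    also have "\<dots> \<le> l^2 * (kk * D)" unfolding D_def by (rule mult_left_mono[OF Pim_T]) simp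
    finally have nd2: "norm d'^2 \<le> 2 * norm z0^2 + 2 * (l^2 * (kk * D))" by simp
    have "D \<le> (1-l)^2 * D + c2 * norm d'^2" using lowc le cost' by linarith
    also have "\<dots> \<le> (1-l)^2 * D + c2 * (2 * norm z0^2 + 2 * l^2 * kk * D)"
      using mult_left_mono[OF nd2 c2] by (simp add: mult.assoc)
    finally have "D \<le> (1-l)^2 * D + c2 * (2 * norm z0^2 + 2 * l^2 * kk * D)" .
    then have "l * D \<le> 2 * c2 * norm z0^2" by (rule arith_improve[OF D0 lpos c2 kk l2])
    then show ?thesis unfolding D_def z0_def by simp
  qed
  show ?thesis
    by (rule exI[of _ \<eta>], rule conjI[OF \<eta>], rule exI[of _ l], rule conjI[OF lpos], rule exI[of _ "2 * c2"])
       (use main in blast)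
qed

end

theorem theorem1:
  fixes A :: "real^'n^'n" and B :: "real^'m^'n" and C :: "real^'n^'q"
    and Z :: "((real^'n) \<times> (real^'m)) set" and K :: "real^'n^'m"
    and S :: "real^'p^'p" and Qe :: "real^'p^'q" and \<rho> :: nat
    and Pim :: "real^'p^'n" and \<Gamma> :: "real^'p^'m" and L :: "real^'p^'m"
    and \<epsilon> :: real and T0 T :: "real^'p^'p" and Q P :: "real^'n^'n" and R :: "real^'m^'m"
    and N :: nat
    and x :: "nat \<Rightarrow> real^'n" and u :: "nat \<Rightarrow> real^'m" and w :: "nat \<Rightarrow> real^'p"
    and t :: nat
  assumes ctrb: "controllable A B"
    and Z_polytope: "polytope Z" and Z_int: "0 \<in> interior Z"
    and K_schur: "schur (A + B ** K)"
    and rho_pos: "\<rho> > 0" and S_periodic: "mpow S \<rho> = mat 1"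
    and hautus: "\<And>mu. is_eigenvalue S mu \<Longrightarrow> rank (hautus_matrix A B C mu) = CARD('n + 'q)"
    and regulator1: "A ** Pim + B ** \<Gamma> = Pim ** S" and regulator2: "C ** Pim = Qe"
    and L_def: "L = \<Gamma> - K ** Pim"
    and eps: "0 < \<epsilon>" "\<epsilon> < 1"
    and T0_pd: "sym_pos_def T0"
    and T_def: "T = (\<Sum>k\<in>{1..\<rho>}. transpose (mpow S k) ** T0 ** mpow S k)"
    and Q_pd: "sym_pos_def Q" and R_pd: "sym_pos_def R"
    and P_pd: "sym_pos_def P"
    and lyap: "transpose (A + B ** K) ** P ** (A + B ** K) - P + Q = 0"
    and horizon: "N \<ge> CARD('n)"
    and sys: "\<And>s. x (Suc s) = A *v x s + B *v u s"
    and exo: "\<And>s. w (Suc s) = S *v w s"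
    and mpc: "\<And>s. qp_feasible A B K L S \<epsilon> Z N (x s) (w s) \<Longrightarrow>
        \<exists>wb0 v. qp_optimal A B K L S Pim T Q R P \<epsilon> Z N (x s) (w s) wb0 v
               \<and> u s = K *v x s + L *v wb0 + v 0"
    and feas: "qp_feasible A B K L S \<epsilon> Z N (x t) (w t)"
  shows "(x t, u t) \<in> Z
         \<and> qp_feasible A B K L S \<epsilon> Z N (x (Suc t)) (w (Suc t))
         \<and> (w t \<in> R_inf A B K L S \<epsilon> Z \<longrightarrow> (\<lambda>s. C *v x s - Qe *v w s) \<longlonglongrightarrow> 0)"
proof -
  interpret mpcloc A B K S Pim \<Gamma> L \<epsilon> Z N \<rho>
    by unfold_locales (use Z_polytope polytope_imp_convex polytope_imp_compact Z_int K_schur rho_pos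
        S_periodic regulator1 L_def eps horizon in auto)
  have Tinv: "\<And>a. qnorm2 T (S *v a) = qnorm2 T a"
    by (rule T_invariant[OF T_def S_periodic rho_pos])
  have lyapid: "\<And>z. qnorm2 P (Ac *v z) + qnorm2 Q z = qnorm2 P z"
    by (rule lyap_identity[OF lyap])
  obtain mT0 where mT0: "mT0 > 0" "\<And>e. mT0 * norm e^2 \<le> qnorm2 T0 e"
    using pd_lower[OF T0_pd] by blast
  have Tlow: "mT0 * norm e^2 \<le> qnorm2 T e" for e
  proof -
    have Tq: "qnorm2 T e = (\<Sum>k\<in>{1..\<rho>}. qnorm2 T0 (mpow S k *v e))"
      unfolding T_def by (simp add: qnorm2_sum qnorm2_congr)
    have "qnorm2 T0 (mpow S \<rho> *v e) \<le> (\<Sum>k\<in>{1..\<rho>}. qnorm2 T0 (mpow S k *v e))"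
      by (rule member_le_sum) (use rho_pos qnorm2_nonneg[OF T0_pd] in auto)
    then show ?thesis using mT0(2)[of e] S_periodic Tq by simp
  qed
  have Tnn: "0 \<le> qnorm2 T e" for e
    using Tlow[of e] mT0(1) by (meson order_trans zero_le_mult_iff norm_ge_zero zero_le_power2 less_imp_le)
  obtain M where NM: "N = Suc M" using Npos by (cases N) auto
  have "\<forall>s. \<exists>p. qp_feasible A B K L S \<epsilon> Z N (x s) (w s) \<longrightarrow>
          qp_optimal A B K L S Pim T Q R P \<epsilon> Z N (x s) (w s) (fst p) (snd p)
          \<and> u s = K *v x s + L *v fst p + snd p 0"
    using mpc by fastforce
  then obtain opt where opt: "\<And>s. qp_feasible A B K L S \<epsilon> Z N (x s) (w s) \<Longrightarrow>
          qp_optimal A B K L S Pim T Q R P \<epsilon> Z N (x s) (w s) (fst (opt s)) (snd (opt s))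
          \<and> u s = K *v x s + L *v fst (opt s) + snd (opt s) 0"
    by metis
  define wbo where "wbo s = fst (opt s)" for s
  define vo where "vo s = snd (opt s)" for s
  have optw: "qp_optimal A B K L S Pim T Q R P \<epsilon> Z N (x s) (w s) (wbo s) (vo s)"
     and uw: "u s = K *v x s + L *v wbo s + vo s 0"
    if "qp_feasible A B K L S \<epsilon> Z N (x s) (w s)" for s
    using opt[OF that] unfolding wbo_def vo_def by auto
  have xnext: "x (Suc s) = A *v x s + B *v (K *v x s + L *v wbo s + vo s 0)"
    if "qp_feasible A B K L S \<epsilon> Z N (x s) (w s)" for s
    using sys[of s] uw[OF that] by simp
  have candf: "qp_feasible_for A B K L S \<epsilon> Z N (x (Suc s)) (S *v wbo s) (\<lambda>k. if k < M then vo s (Suc k) else 0)"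
    if f: "qp_feasible A B K L S \<epsilon> Z N (x s) (w s)" for s
    unfolding xnext[OF f]
    by (rule shift_feasible[OF _ NM]) (use optw[OF f] in \<open>simp add: qp_optimal_def\<close>)
  have stepf: "qp_feasible A B K L S \<epsilon> Z N (x (Suc s)) (w (Suc s))"
    if "qp_feasible A B K L S \<epsilon> Z N (x s) (w s)" for s
    using candf[OF that] unfolding qp_feasible_def by blast
  have feas_all: "qp_feasible A B K L S \<epsilon> Z N (x (j + t)) (w (j + t))" for j
    by (induction j) (simp_all add: feas stepf)
  have part1: "(x t, u t) \<in> Z"
  proof -
    have ff: "qp_feasible_for A B K L S \<epsilon> Z N (x t) (wbo t) (vo t)"
      using optw[OF feas] unfolding qp_optimal_def by blast
    then have "(pred_state Ac B L S (x t) (wbo t) (vo t) 0,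
                K *v pred_state Ac B L S (x t) (wbo t) (vo t) 0 + L *v (mpow S 0 *v wbo t) + vo t 0) \<in> Z"
      unfolding qp_feasible_for_def using Npos by blast
    then show ?thesis using uw[OF feas] by simp
  qed
  have part3: "(\<lambda>s. C *v x s - Qe *v w s) \<longlonglongrightarrow> 0" if Rw: "w t \<in> R_inf A B K L S \<epsilon> Z"
  proof -
    have admw: "\<exists>d. adm (w (j + t)) d" for j
    proof (induction j)
      case 0
      from Rw obtain xh where "(xh, w t) \<in> O_inf A B K L S \<epsilon> Z" unfolding R_inf_def by blast
      then show ?case using Oinf_char by auto
    next
      case (Suc j)
      then obtain d where "adm (w (j + t)) d" by blast
      then have "adm (S *v w (j + t)) (Ac *v d)" by (rule adm_shift)
      then show ?case using exo[of "j + t"] by auto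
    qed
    have ssw: "\<forall>k. sp (w (j + t)) k \<in> Zs" for j
      using admw[of j] adm_ss by blast
    define z0 where "z0 j = x (j + t) - Pim *v wbo (j + t)" for j
    define V where "V j = qp_cost A B K L S Pim T Q R P N (x (j + t)) (w (j + t)) (wbo (j + t)) (vo (j + t))" for j
    define g where "g j = qnorm2 Q (z0 j)" for j
    have g0: "0 \<le> g j" for j unfolding g_def by (rule qnorm2_nonneg[OF Q_pd])
    have V0: "0 \<le> V j" for j
      unfolding V_def cost_char
      using Tnn qnorm2_nonneg[OF Q_pd] qnorm2_nonneg[OF R_pd] qnorm2_nonneg[OF P_pd]
      by (simp add: sum_nonneg add_nonneg_nonneg)
    have Vdec: "V (Suc j) + g j \<le> V j" for j
    proof -
      let ?s = "j + t"
      have f: "qp_feasible A B K L S \<epsilon> Z N (x ?s) (w ?s)" by (rule feas_all)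
      let ?vsh = "\<lambda>k. if k < M then vo ?s (Suc k) else 0"
      have cost_eq: "qp_cost A B K L S Pim T Q R P N (x (Suc ?s)) (S *v w ?s) (S *v wbo ?s) ?vsh
           + qnorm2 Q (x ?s - Pim *v wbo ?s) + qnorm2 R (vo ?s 0) = V j"
        unfolding V_def xnext[OF f] by (rule shift_cost[OF NM Tinv lyapid])
      have "V (Suc j) \<le> qp_cost A B K L S Pim T Q R P N (x (Suc ?s)) (w (Suc ?s)) (S *v wbo ?s) ?vsh"
        using optw[OF feas_all[of "Suc j"]] candf[OF f] unfolding qp_optimal_def V_def by simp
      then show ?thesis
        using cost_eq exo[of ?s] qnorm2_nonneg[OF R_pd, of "vo ?s 0"] unfolding g_def z0_def by simp
    qed
    have sumg: "(\<Sum>i<n. g i) \<le> V 0 - V n" for n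
    proof (induction n)
      case 0 then show ?case by simp
    next
      case (Suc n) then show ?case using Vdec[of n] by simp
    qed
    have "summable g"
      by (rule summableI_nonneg_bounded[OF g0, where x="V 0"]) (use sumg V0 in \<open>smt (verit)\<close>)
    then have gl: "g \<longlonglongrightarrow> 0" by (rule summable_LIMSEQ_zero)
    obtain mQ where mQ: "mQ > 0" "\<And>e. mQ * norm e^2 \<le> qnorm2 Q e" using pd_lower[OF Q_pd] by blast
    have z0b: "norm (z0 j) \<le> sqrt (g j / mQ)" for j
      by (rule real_le_rsqrt) (use mQ(2)[of "z0 j"] mQ(1) in \<open>simp add: g_def field_simps mult.commute\<close>)
    have "(\<lambda>j. sqrt (g j / mQ)) \<longlonglongrightarrow> sqrt (0 / mQ)"
      by (intro tendsto_real_sqrt tendsto_divide gl tendsto_const) (use mQ in simp)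
    then have sl: "(\<lambda>j. sqrt (g j / mQ)) \<longlonglongrightarrow> 0" by simp
    have z0l: "z0 \<longlonglongrightarrow> 0"
      by (rule Lim_null_comparison[OF always_eventually sl]) (use z0b in blast)
    then have nz0l: "(\<lambda>j. norm (z0 j)) \<longlonglongrightarrow> 0" by (rule tendsto_norm_zero)
    obtain \<eta> l c where \<eta>: "\<eta> > 0" and lpos: "l > 0" and imp:
      "\<And>x w wb v. qp_optimal A B K L S Pim T Q R P \<epsilon> Z N x w wb v
            \<and> (\<forall>k. sp w k \<in> Zs) \<and> norm (x - Pim *v wb) < \<eta>
            \<longrightarrow> l * qnorm2 T (wb - w) \<le> c * norm (x - Pim *v wb)^2"
      using improve[OF ctrb mT0(1) Tlow Q_pd R_pd P_pd] by blast
    have ev: "eventually (\<lambda>j. norm (z0 j) < \<eta>) sequentially"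
      using order_tendstoD(2)[OF nz0l \<eta>] .
    obtain kC where kC: "kC > 0" "\<And>y. norm (C *v y) \<le> kC * norm y"
      using linear_bounded_pos[OF matrix_vector_mul_linear[of C]] by blast
    obtain kQe where kQe: "kQe > 0" "\<And>y. norm (Qe *v y) \<le> kQe * norm y"
      using linear_bounded_pos[OF matrix_vector_mul_linear[of Qe]] by blast
    define c' where "c' = max c 0"
    define K2 where "K2 = sqrt (c' / (l * mT0))"
    have K2: "K2 \<ge> 0" unfolding K2_def c'_def using lpos mT0 by simp
    define K1 where "K1 = kC + kQe * K2"
    have err_eq: "C *v x (j + t) - Qe *v w (j + t) = C *v z0 j + Qe *v (wbo (j + t) - w (j + t))" for j
    proof -
      have "C *v (Pim *v y) = Qe *v y" for y
        using regulator2 by (simp add: matrix_vector_mul_assoc)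
      then show ?thesis unfolding z0_def
        by (simp add: matrix_vector_mult_diff_distrib algebra_simps)
    qed
    have bnd: "eventually (\<lambda>j. norm (C *v x (j + t) - Qe *v w (j + t)) \<le> K1 * norm (z0 j)) sequentially"
      using ev
    proof (rule eventually_mono)
      fix j assume small: "norm (z0 j) < \<eta>"
      let ?e = "wbo (j + t) - w (j + t)"
      have "l * qnorm2 T ?e \<le> c * norm (z0 j)^2"
        using imp[of "x (j + t)" "w (j + t)" "wbo (j + t)" "vo (j + t)"] optw[OF feas_all[of j]] ssw[of j] small
        unfolding z0_def by blast
      also have "\<dots> \<le> c' * norm (z0 j)^2" unfolding c'_def by (intro mult_right_mono) auto
      finally have "l * (mT0 * norm ?e^2) \<le> c' * norm (z0 j)^2"
        using mult_left_mono[OF Tlow[of ?e], of l] lpos by linarith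
      then have "norm ?e^2 \<le> (c' / (l * mT0)) * norm (z0 j)^2"
        using lpos mT0(1) by (simp add: field_simps)
      also have "\<dots> = (K2 * norm (z0 j))^2"
        unfolding K2_def using lpos mT0(1) by (simp add: power_mult_distrib c'_def)
      finally have "norm ?e \<le> K2 * norm (z0 j)"
        by (rule power2_le_imp_le) (use K2 in simp)
      then have "kQe * norm ?e \<le> kQe * (K2 * norm (z0 j))" using kQe(1) by (simp add: mult_left_mono)
      then have "norm (Qe *v ?e) \<le> kQe * K2 * norm (z0 j)" using kQe(2)[of ?e] by (simp add: mult.assoc)
      moreover have "norm (C *v z0 j) \<le> kC * norm (z0 j)" by (rule kC(2))
      ultimately show "norm (C *v x (j + t) - Qe *v w (j + t)) \<le> K1 * norm (z0 j)"
        unfolding err_eq K1_def using norm_triangle_ineq[of "C *v z0 j" "Qe *v ?e"]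
        by (simp add: algebra_simps)
    qed
    have "(\<lambda>j. K1 * norm (z0 j)) \<longlonglongrightarrow> 0"
      using tendsto_mult[OF tendsto_const nz0l, of K1] by simp
    then have "(\<lambda>j. C *v x (j + t) - Qe *v w (j + t)) \<longlonglongrightarrow> 0"
      by (rule Lim_null_comparison[OF bnd])
    then show ?thesis by (rule LIMSEQ_offset)
  qed
  show ?thesis using part1 stepf[OF feas] part3 by blast
qed

end
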